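(* Consider the modified Ghaffari process described in the context, with marking decisions in each phase that are only pairwise independent. If phase $t$ is a type-2 golden phase for an undecided node $v$, i.e., $d_t(v)>1/4$ and $\sum_{u\in N(v),\, u \text{ light}} p_t(u)\ge d_t(v)/10$, then $v$ is removed in phase $t$ (i.e., $v$ or one of its undecided neighbors joins the independent set) with probability at least $1/160$.
   Context: Let $G=(V,E)$ be an undirected graph. The process runs in phases $t=0,1,2,\dots$ on the graph induced by the undecided nodes (initially all nodes); $N(v)$ denotes the set of undecided neighbors of $v$. Each undecided node $v$ has a value $p_t(v)$, with $p_0(v)=1/4$; its effective degree is $d_t(v)=\sum_{u\in N(v)}p_t(u)$. Then $p_{t+1}(v)=p_t(v)/2$ if $d_t(v)\ge 1/2$, and $p_{t+1}(v)=\min\{2p_t(v),1/4\}$ if $d_t(v)<1/2$. A node $u$ is light in phase $t$ if $d_t(u)<1/4$. In phase $t$, each undecided node $v$ becomes marked with probability $p_t(v)$, where the marking events of the nodes in phase $t$ are pairwise independent (given the state at the start of the phase); a marked node none of whose undecided neighbors is marked joins the independent set, and it and all its neighbors are removed. *)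

theory Defs
  imports "HOL-Probability.Probability_Mass_Function"
begin

text \<open>U is the set of undecided nodes
at the start of the phase, E a symmetric irreflexive adjacency relation,
p the current values p_t, and the marking is a random set of marked nodes.\<close>

definition nbrs :: "('a \<Rightarrow> 'a \<Rightarrow> bool) \<Rightarrow> 'a set \<Rightarrow> 'a \<Rightarrow> 'a set" where
  "nbrs E U v = {u \<in> U. E v u}"

definition eff_deg :: "('a \<Rightarrow> 'a \<Rightarrow> bool) \<Rightarrow> 'a set \<Rightarrow> ('a \<Rightarrow> real) \<Rightarrow> 'a \<Rightarrow> real" where
  "eff_deg E U p v = (\<Sum>u\<in>nbrs E U v. p u)"

definition light :: "('a \<Rightarrow> 'a \<Rightarrow> bool) \<Rightarrow> 'a set \<Rightarrow> ('a \<Rightarrow> real) \<Rightarrow> 'a \<Rightarrow> bool" where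
  "light E U p u \<longleftrightarrow> eff_deg E U p u < 1/4"

definition golden_type2 :: "('a \<Rightarrow> 'a \<Rightarrow> bool) \<Rightarrow> 'a set \<Rightarrow> ('a \<Rightarrow> real) \<Rightarrow> 'a \<Rightarrow> bool" where
  "golden_type2 E U p v \<longleftrightarrow>
     eff_deg E U p v > 1/4 \<and>
     (\<Sum>u\<in>{u \<in> nbrs E U v. light E U p u}. p u) \<ge> eff_deg E U p v / 10"

definition pairwise_indep_marking :: "'a set \<Rightarrow> ('a \<Rightarrow> real) \<Rightarrow> 'a set pmf \<Rightarrow> bool" where
  "pairwise_indep_marking U p M \<longleftrightarrow>
     set_pmf M \<subseteq> Pow U \<and>
     (\<forall>u\<in>U. measure_pmf.prob M {S. u \<in> S} = p u) \<and>
     (\<forall>u\<in>U. \<forall>w\<in>U. u \<noteq> w \<longrightarrow> measure_pmf.prob M {S. u \<in> S \<and> w \<in> S} = p u * p w)"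

definition joins :: "('a \<Rightarrow> 'a \<Rightarrow> bool) \<Rightarrow> 'a set \<Rightarrow> 'a set \<Rightarrow> 'a \<Rightarrow> bool" where
  "joins E U S w \<longleftrightarrow> w \<in> S \<and> (\<forall>u\<in>nbrs E U w. u \<notin> S)"

definition removed :: "('a \<Rightarrow> 'a \<Rightarrow> bool) \<Rightarrow> 'a set \<Rightarrow> 'a set \<Rightarrow> 'a \<Rightarrow> bool" where
  "removed E U S v \<longleftrightarrow> (\<exists>w\<in>insert v (nbrs E U v). joins E U S w)"

end

theory Submission
  imports Defs
begin

lemma pmf_un_eq:
  "measure_pmf.prob M (A \<union> B) = measure_pmf.prob M A + measure_pmf.prob M B - measure_pmf.prob M (A \<inter> B)"
  using measure_pmf.finite_measure_Union'[of A M B] measure_pmf.finite_measure_Diff'[of B M A]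
  by (simp add: Int_commute)

lemma bonf:
  fixes M :: "'b pmf" and A :: "'i \<Rightarrow> 'b set" and q :: "'i \<Rightarrow> real"
  assumes "finite I" "\<forall>i\<in>I. q i \<ge> 0"
    "\<forall>i\<in>I. \<forall>j\<in>I. i \<noteq> j \<longrightarrow> measure_pmf.prob M (A i \<inter> A j) \<le> q i * q j"
  shows "measure_pmf.prob M (\<Union>i\<in>I. A i) \<ge> (\<Sum>i\<in>I. measure_pmf.prob M (A i)) - (\<Sum>i\<in>I. q i)^2"
  using assms
proof (induction I rule: finite_induct)
  case empty
  then show ?case by simp
next
  case (insert i I)
  let ?B = "\<Union>j\<in>I. A j"
  have un: "measure_pmf.prob M (A i \<union> ?B) = measure_pmf.prob M (A i) + measure_pmf.prob M ?B
      - measure_pmf.prob M (A i \<inter> ?B)" by (rule pmf_un_eq)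
  have eq: "A i \<inter> ?B = (\<Union>j\<in>I. A i \<inter> A j)" by blast
  have "measure_pmf.prob M (A i \<inter> ?B) \<le> (\<Sum>j\<in>I. measure_pmf.prob M (A i \<inter> A j))"
    unfolding eq by (rule measure_pmf.finite_measure_subadditive_finite) (use insert in auto)
  also have "\<dots> \<le> (\<Sum>j\<in>I. q i * q j)"
    by (rule sum_mono) (use insert in auto)
  also have "\<dots> = q i * sum q I" by (simp add: sum_distrib_left)
  finally have c: "measure_pmf.prob M (A i \<inter> ?B) \<le> q i * sum q I" .
  have IH: "measure_pmf.prob M ?B \<ge> (\<Sum>j\<in>I. measure_pmf.prob M (A j)) - (sum q I)^2"
    using insert by auto
  have qi: "q i \<ge> 0" using insert by auto
  have s: "sum q I \<ge> 0" using insert by (auto intro: sum_nonneg)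
  have "q i * sum q I + (sum q I)^2 \<le> (q i + sum q I)^2"
    using qi s by (simp add: power2_eq_square algebra_simps)
  then show ?case using un c IH insert by (simp add: sum.insert)
qed

lemma subset_sum:
  fixes p :: "'a \<Rightarrow> real"
  assumes "finite A" "\<forall>x\<in>A. 0 \<le> p x \<and> p x \<le> 1/4" "sum p A \<ge> 1/40"
  shows "\<exists>B\<subseteq>A. 1/40 \<le> sum p B \<and> sum p B \<le> 11/40"
  using assms
proof (induction A rule: finite_induct)
  case empty
  then show ?case by simp
next
  case (insert x A)
  show ?case
  proof (cases "sum p (insert x A) \<le> 11/40")
    case True
    then show ?thesis using insert by blast
  next
    case False
    hence "sum p A \<ge> 1/40" using insert by auto
    then obtain B where "B \<subseteq> A" "1/40 \<le> sum p B \<and> sum p B \<le> 11/40" using insert by auto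
    then show ?thesis by blast
  qed
qed

theorem lemma4:
  fixes E :: "'a \<Rightarrow> 'a \<Rightarrow> bool" and U :: "'a set" and p :: "'a \<Rightarrow> real"
    and M :: "'a set pmf" and v :: 'a
  assumes "finite U"
    and "\<And>x y. E x y \<Longrightarrow> E y x"
    and "\<And>x. \<not> E x x"
    and "v \<in> U"
    and "\<And>u. u \<in> U \<Longrightarrow> 0 < p u \<and> p u \<le> 1/4"
    and "pairwise_indep_marking U p M"
    and "golden_type2 E U p v"
  shows "measure_pmf.prob M {S. removed E U S v} \<ge> 1/160"
proof -
  note pim = assms(6)[unfolded pairwise_indep_marking_def]
  define L where "L = {u \<in> nbrs E U v. light E U p u}"
  have LU: "L \<subseteq> U" unfolding L_def nbrs_def by auto
  have finL: "finite L" using LU assms(1) finite_subset by blast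
  have "sum p L \<ge> 1/40" using assms(7) unfolding golden_type2_def L_def by linarith
  then obtain B where B: "B \<subseteq> L" "1/40 \<le> sum p B" "sum p B \<le> 11/40"
    using subset_sum[OF finL, of p] LU assms(5) by (meson less_imp_le subsetD)
  have BU: "B \<subseteq> U" using B LU by auto
  have finB: "finite B" using finL B finite_subset by blast
  define A where "A u = {S. joins E U S u}" for u
  have PA: "measure_pmf.prob M (A u) \<ge> 3/4 * p u" if "u \<in> B" for u
  proof -
    have uU: "u \<in> U" using that BU by auto
    have lu: "eff_deg E U p u < 1/4" using that B unfolding L_def light_def by auto
    have finN: "finite (nbrs E U u)" using assms(1) unfolding nbrs_def by auto
    have sub: "{S. u \<in> S} \<subseteq> A u \<union> (\<Union>w\<in>nbrs E U u. {S. u \<in> S \<and> w \<in> S})"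
      unfolding A_def joins_def by auto
    have "p u = measure_pmf.prob M {S. u \<in> S}" using pim uU by auto
    also have "\<dots> \<le> measure_pmf.prob M (A u \<union> (\<Union>w\<in>nbrs E U u. {S. u \<in> S \<and> w \<in> S}))"
      by (rule measure_pmf.finite_measure_mono[OF sub]) simp
    also have "\<dots> \<le> measure_pmf.prob M (A u) + measure_pmf.prob M (\<Union>w\<in>nbrs E U u. {S. u \<in> S \<and> w \<in> S})"
      by (simp add: pmf_un_eq)
    also have "measure_pmf.prob M (\<Union>w\<in>nbrs E U u. {S. u \<in> S \<and> w \<in> S})
        \<le> (\<Sum>w\<in>nbrs E U u. measure_pmf.prob M {S. u \<in> S \<and> w \<in> S})"
      by (rule measure_pmf.finite_measure_subadditive_finite[OF finN]) simp
    also have "\<dots> = (\<Sum>w\<in>nbrs E U u. p u * p w)"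
    proof (rule sum.cong)
      fix w assume "w \<in> nbrs E U u"
      hence "w \<in> U" "u \<noteq> w" using assms(3) unfolding nbrs_def by auto
      thus "measure_pmf.prob M {S. u \<in> S \<and> w \<in> S} = p u * p w" using pim uU by auto
    qed simp
    also have "\<dots> = p u * eff_deg E U p u" unfolding eff_deg_def by (simp add: sum_distrib_left)
    finally have "p u \<le> measure_pmf.prob M (A u) + p u * eff_deg E U p u" by simp
    moreover have "p u * eff_deg E U p u \<le> p u * (1/4)"
      using lu assms(5)[OF uU] by (intro mult_left_mono) auto
    ultimately show ?thesis by linarith
  qed
  have PAA: "\<forall>i\<in>B. \<forall>j\<in>B. i \<noteq> j \<longrightarrow> measure_pmf.prob M (A i \<inter> A j) \<le> p i * p j"
  proof (intro ballI impI)
    fix i j assume ij: "i \<in> B" "j \<in> B" "i \<noteq> j"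
    have "measure_pmf.prob M (A i \<inter> A j) \<le> measure_pmf.prob M {S. i \<in> S \<and> j \<in> S}"
      by (rule measure_pmf.finite_measure_mono) (simp_all add: A_def joins_def, blast)
    also have "\<dots> = p i * p j" using pim ij BU by (meson subsetD)
    finally show "measure_pmf.prob M (A i \<inter> A j) \<le> p i * p j" .
  qed
  have qnn: "\<forall>i\<in>B. p i \<ge> 0" using BU assms(5) by fastforce
  have bo: "measure_pmf.prob M (\<Union>i\<in>B. A i) \<ge> (\<Sum>i\<in>B. measure_pmf.prob M (A i)) - (sum p B)^2"
    by (rule bonf[OF finB qnn PAA])
  have "(\<Sum>i\<in>B. measure_pmf.prob M (A i)) \<ge> (\<Sum>i\<in>B. 3/4 * p i)"
    by (rule sum_mono) (use PA in auto)
  hence s1: "(\<Sum>i\<in>B. measure_pmf.prob M (A i)) \<ge> 3/4 * sum p B" by (simp add: sum_distrib_left)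
  have sub2: "(\<Union>i\<in>B. A i) \<subseteq> {S. removed E U S v}"
    using B(1) unfolding A_def removed_def L_def by blast
  have m: "measure_pmf.prob M (\<Union>i\<in>B. A i) \<le> measure_pmf.prob M {S. removed E U S v}"
    by (rule measure_pmf.finite_measure_mono[OF sub2]) simp
  have "sum p B * (3/4 - sum p B) \<ge> (1/40) * (3/4 - 11/40)"
    using B by (intro mult_mono) auto
  hence "3/4 * sum p B - (sum p B)^2 \<ge> 1/160"
    by (simp add: power2_eq_square algebra_simps)
  then show ?thesis using bo s1 m by linarith
qed

end
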